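(* Let $Y(0),Y(1)$ be integrable real-valued potential outcomes and $X$ a random vector in $\mathbb{R}^{d_X}$, $d_X\geq 3$, with support $\mathcal{X}$, written (after reordering coordinates) as $X=(X^{(1)},X^{(2)})$ where $X^{(1)}$ consists of exactly two components and $X^{(2)}$ of the remaining ones; for $x\in\mathcal{X}$ write $x=(x^{(1)},x^{(2)})$ correspondingly. Suppose: (Deterministic treatment) $\mathcal{X}=\mathcal{X}_0\cup\mathcal{X}_1$ with $\mathcal{X}_0\cap\mathcal{X}_1=\emptyset$, $D=1\{X\in\mathcal{X}_1\}$ and $Y=DY(1)+(1-D)Y(0)$; (Continuity) $x\mapsto E[Y(0)|X=x]$ and $x\mapsto E[Y(1)|X=x]$ are continuous on $\mathcal{X}$; (Conditional comonotonicity) for all $x_1,x_2\in\mathcal{X}$ with $x_1^{(2)}=x_2^{(2)}$, $$E[Y(1)|X=x_1]\geq E[Y(1)|X=x_2]\iff E[Y(0)|X=x_1]\geq E[Y(0)|X=x_2].$$ Let $\mathcal{F}=\mathrm{cl}(\mathrm{int}(\mathcal{X}_1))\cap\mathrm{cl}(\mathrm{int}(\mathcal{X}_0))$ and for $d\in\{0,1\}$ let $g_d$ be a function on $\mathcal{X}_d\cup\mathcal{F}$ with $g_d(x)=E[Y|X=x]$ for $x\in\mathcal{X}_d$ and $g_d$ continuous at each point of $\mathcal{F}$. Then: (i) if $d\in\{0,1\}$, $x\in\mathcal{X}_d$ and there exists $x^*\in\mathcal{F}$ with $x^{*(2)}=x^{(2)}$ and $E[Y|X=x]=g_d(x^* )$,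 then $E[Y(1)|X=x]=g_1(x^* )$ and $E[Y(0)|X=x]=g_0(x^* )$; (ii) for any $x_1,x_2\in\mathcal{F}$ with $x_1^{(2)}=x_2^{(2)}$, $g_0(x_1)\geq g_0(x_2)\iff g_1(x_1)\geq g_1(x_2)$.
   Context: Conditional expectation functions $x\mapsto E[Y(d)|X=x]$ are understood as the unique continuous versions. For $x\in\mathcal{X}_d$, $E[Y|X=x]$ is understood as $E[Y(d)|X=x]$. $\mathrm{int}$ and $\mathrm{cl}$ denote interior and closure in $\mathbb{R}^{d_X}$. *)

theory Defs
  imports "HOL-Probability.Probability"
begin

text \<open>Support of the distribution of a random vector X: the set of points every
open ball around which has positive probability (the smallest closed set of full measure).\<close>
definition rv_support :: "'a measure \<Rightarrow> ('a \<Rightarrow> 'b::metric_space) \<Rightarrow> 'b set" where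
  "rv_support M X = {x. \<forall>e>0. measure M {\<omega>\<in>space M. X \<omega> \<in> ball x e} > 0}"

text \<open>m is a version of the regression function x |-> E[Y | X = x], i.e. m(X) is a
version of the conditional expectation of Y given sigma(X).\<close>
definition cond_mean_fun ::
  "'a measure \<Rightarrow> ('a \<Rightarrow> 'b::topological_space) \<Rightarrow> ('a \<Rightarrow> real) \<Rightarrow> ('b \<Rightarrow> real) \<Rightarrow> bool" where
  "cond_mean_fun M X Y m \<longleftrightarrow>
     m \<in> borel_measurable borel \<and> integrable M (\<lambda>\<omega>. m (X \<omega>)) \<and>
     (\<forall>A\<in>sets borel. (LINT \<omega>:(X -` A \<inter> space M)|M. Y \<omega>) = (LINT \<omega>:(X -` A \<inter> space M)|M. m (X \<omega>)))"

end

theory Submission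
  imports Defs
begin

lemma rv_support_closed:
  fixes X :: "'a \<Rightarrow> 'b::metric_space"
  assumes "prob_space M" "X \<in> borel_measurable M"
  shows "closed (rv_support M X)"
proof -
  interpret prob_space M by fact
  have meas: "{\<omega>\<in>space M. X \<omega> \<in> ball y d} \<in> sets M" for y d
  proof -
    have "X -` ball y d \<inter> space M \<in> sets M"
      using measurable_sets[OF assms(2)] by auto
    moreover have "X -` ball y d \<inter> space M = {\<omega>\<in>space M. X \<omega> \<in> ball y d}" by auto
    ultimately show ?thesis by simp
  qed
  have "open (- rv_support M X)"
    unfolding open_contains_ball
  proof
    fix x assume "x \<in> - rv_support M X"
    then obtain e where e: "e > 0" "\<not> measure M {\<omega>\<in>space M. X \<omega> \<in> ball x e} > 0"
      by (auto simp: rv_support_def)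
    have "ball x e \<subseteq> - rv_support M X"
    proof
      fix y assume y: "y \<in> ball x e"
      define d where "d = e - dist x y"
      have d: "d > 0" using y by (simp add: d_def)
      have "ball y d \<subseteq> ball x e"
      proof
        fix z assume "z \<in> ball y d"
        then have "dist y z < d" by simp
        moreover have "dist x z \<le> dist x y + dist y z" by (rule dist_triangle)
        ultimately show "z \<in> ball x e" by (simp add: d_def)
      qed
      hence "measure M {\<omega>\<in>space M. X \<omega> \<in> ball y d} \<le> measure M {\<omega>\<in>space M. X \<omega> \<in> ball x e}"
        by (intro finite_measure_mono meas) auto
      with e d show "y \<in> - rv_support M X"
        by (auto simp: rv_support_def intro!: exI[of _ d])
    qed
    with e show "\<exists>e>0. ball x e \<subseteq> - rv_support M X" by blast
  qed
  thus ?thesis by (simp add: closed_open)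
qed

lemma g_eq_m:
  fixes g m :: "'b::metric_space \<Rightarrow> real"
  assumes xs: "xs \<in> closure A" "xs \<in> S" and AS: "A \<subseteq> S"
    and cm: "continuous_on S m" and gm: "\<And>x. x \<in> A \<Longrightarrow> g x = m x"
    and gc: "continuous (at xs within (A \<union> F)) g"
  shows "g xs = m xs"
proof (cases "xs \<in> A")
  case True then show ?thesis using gm by simp
next
  case False
  have nt: "at xs within A \<noteq> bot"
    using xs(1) False by (simp add: trivial_limit_within closure_def)
  have "(g \<longlongrightarrow> g xs) (at xs within (A \<union> F))"
    using gc by (simp add: continuous_within)
  then have t1: "(g \<longlongrightarrow> g xs) (at xs within A)"
    by (rule tendsto_within_subset) simp
  have "(m \<longlongrightarrow> m xs) (at xs within S)"
    using cm xs(2) by (simp add: continuous_on_def)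
  then have t2: "(m \<longlongrightarrow> m xs) (at xs within A)"
    by (rule tendsto_within_subset) (rule AS)
  have ev: "eventually (\<lambda>x. m x = g x) (at xs within A)"
    unfolding eventually_at_filter by (simp add: gm)
  have "(g \<longlongrightarrow> m xs) (at xs within A)"
    by (rule tendsto_cong[THEN iffD1, OF ev t2])
  then show ?thesis using nt t1
    by (simp add: tendsto_unique)
qed

theorem theorem3:
  fixes M :: "'a measure"
    and X :: "'a \<Rightarrow> (real^2) \<times> (real^'m)"
    and Y0 Y1 Y :: "'a \<Rightarrow> real"
    and D :: "'a \<Rightarrow> real"
    and Xs X0 X1 :: "((real^2) \<times> (real^'m)) set"
    and m0 m1 g0 g1 :: "(real^2) \<times> (real^'m) \<Rightarrow> real"
    and F :: "((real^2) \<times> (real^'m)) set"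
  assumes prob: "prob_space M"
    and X_rv: "X \<in> borel_measurable M"
    and int0: "integrable M Y0" and int1: "integrable M Y1"
    and supp: "Xs = rv_support M X"
    and partition: "Xs = X0 \<union> X1" "X0 \<inter> X1 = {}"
    and D_def: "\<And>\<omega>. D \<omega> = (if X \<omega> \<in> X1 then 1 else 0)"
    and Y_def: "\<And>\<omega>. Y \<omega> = D \<omega> * Y1 \<omega> + (1 - D \<omega>) * Y0 \<omega>"
    and cm0: "cond_mean_fun M X Y0 m0" and cm1: "cond_mean_fun M X Y1 m1"
    and cont0: "continuous_on Xs m0" and cont1: "continuous_on Xs m1"
    and comono: "\<And>x1 x2. x1 \<in> Xs \<Longrightarrow> x2 \<in> Xs \<Longrightarrow> snd x1 = snd x2 \<Longrightarrow>
                   (m1 x1 \<ge> m1 x2 \<longleftrightarrow> m0 x1 \<ge> m0 x2)"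
    and F_def: "F = closure (interior X1) \<inter> closure (interior X0)"
    and g0_eq: "\<And>x. x \<in> X0 \<Longrightarrow> g0 x = m0 x"
    and g1_eq: "\<And>x. x \<in> X1 \<Longrightarrow> g1 x = m1 x"
    and g0_cont: "\<And>x. x \<in> F \<Longrightarrow> continuous (at x within (X0 \<union> F)) g0"
    and g1_cont: "\<And>x. x \<in> F \<Longrightarrow> continuous (at x within (X1 \<union> F)) g1"
  shows "(\<forall>x xs. x \<in> X0 \<longrightarrow> xs \<in> F \<longrightarrow> snd xs = snd x \<longrightarrow> m0 x = g0 xs \<longrightarrow>
             m1 x = g1 xs \<and> m0 x = g0 xs)
       \<and> (\<forall>x xs. x \<in> X1 \<longrightarrow> xs \<in> F \<longrightarrow> snd xs = snd x \<longrightarrow> m1 x = g1 xs \<longrightarrow>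
             m1 x = g1 xs \<and> m0 x = g0 xs)
       \<and> (\<forall>x1 x2. x1 \<in> F \<longrightarrow> x2 \<in> F \<longrightarrow> snd x1 = snd x2 \<longrightarrow>
             (g0 x1 \<ge> g0 x2 \<longleftrightarrow> g1 x1 \<ge> g1 x2))"
proof -
  have cl: "closed Xs" using rv_support_closed[OF prob X_rv] supp by simp
  have c0: "closure X0 \<subseteq> Xs" using cl partition(1) by (simp add: closure_minimal)
  have c1: "closure X1 \<subseteq> Xs" using cl partition(1) by (simp add: closure_minimal)
  have F0: "F \<subseteq> closure X0" unfolding F_def using closure_mono[OF interior_subset] by blast
  have F1: "F \<subseteq> closure X1" unfolding F_def using closure_mono[OF interior_subset] by blast
  have FX: "F \<subseteq> Xs" using F0 c0 by blast
  have G0: "g0 x = m0 x" if "x \<in> F" for x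
    using g_eq_m[of x X0 Xs m0 g0 F] that F0 FX partition(1) cont0 g0_eq g0_cont by blast
  have G1: "g1 x = m1 x" if "x \<in> F" for x
    using g_eq_m[of x X1 Xs m1 g1 F] that F1 FX partition(1) cont1 g1_eq g1_cont by blast
  show ?thesis
  proof (intro conjI allI impI)
    fix x xs assume a: "x \<in> X0" "xs \<in> F" "snd xs = snd x" "m0 x = g0 xs"
    have "x \<in> Xs" "xs \<in> Xs" using a FX partition(1) by auto
    then have c: "m1 x \<ge> m1 xs \<longleftrightarrow> m0 x \<ge> m0 xs" "m1 xs \<ge> m1 x \<longleftrightarrow> m0 xs \<ge> m0 x"
      using comono[of x xs] comono[of xs x] a(3) by simp_all
    have "g0 xs = m0 xs" "g1 xs = m1 xs" using G0 G1 a(2) by simp_all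
    then show "m1 x = g1 xs" using a(4) c by linarith
    show "m0 x = g0 xs" by fact
  next
    fix x xs assume a: "x \<in> X1" "xs \<in> F" "snd xs = snd x" "m1 x = g1 xs"
    have "x \<in> Xs" "xs \<in> Xs" using a FX partition(1) by auto
    then have c: "m1 x \<ge> m1 xs \<longleftrightarrow> m0 x \<ge> m0 xs" "m1 xs \<ge> m1 x \<longleftrightarrow> m0 xs \<ge> m0 x"
      using comono[of x xs] comono[of xs x] a(3) by simp_all
    have "g0 xs = m0 xs" "g1 xs = m1 xs" using G0 G1 a(2) by simp_all
    then show "m0 x = g0 xs" using a(4) c by linarith
    show "m1 x = g1 xs" by fact
  next
    fix x1 x2 assume a: "x1 \<in> F" "x2 \<in> F" "snd x1 = snd x2"
    then show "g0 x1 \<ge> g0 x2 \<longleftrightarrow> g1 x1 \<ge> g1 x2"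
    proof -
      have "x1 \<in> Xs" "x2 \<in> Xs" using a FX by auto
      then have "m1 x1 \<ge> m1 x2 \<longleftrightarrow> m0 x1 \<ge> m0 x2" using comono a(3) by blast
      moreover have "g0 x1 = m0 x1" "g0 x2 = m0 x2" "g1 x1 = m1 x1" "g1 x2 = m1 x2"
        using G0 G1 a by simp_all
      ultimately show ?thesis by simp
    qed
  qed
qed

end
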